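(* Let $\hat x=(\dots,x_2,x_1)\in\mathrm{Im}(\Psi^+)$ satisfy $x_m\le p_m$ for all $m\ge1$, and let $k\ge1$. The following are equivalent: (1) $c_{k+2l}x_k-c_{k+2l-1}x_{k+1}\ge0$ for all $l\ge1$; (2) $\gamma_kx_k-x_{k+1}\ge0$.
   Context: Let $a_1,a_2\in\mathbb Z_{\ge1}$ with $a_1a_2>4$, $A=\begin{pmatrix}2&-a_1\\-a_2&2\end{pmatrix}$, $\mathfrak g=\mathfrak g(A)$ with simple roots $\alpha_1,\alpha_2$, coroots $\alpha_i^\vee$ ($\langle\alpha_2,\alpha_1^\vee\rangle=-a_1$, $\langle\alpha_1,\alpha_2^\vee\rangle=-a_2$), fundamental weights $\Lambda_1,\Lambda_2$. For $k\in\mathbb Z$, $i_k=1$ if $k$ odd, $i_k=2$ if $k$ even. $\mathbb Z^{+\infty}_{\ge0}$ is the set of sequences $(\dots,x_2,x_1)$ of nonnegative integers, almost all zero, with the Nakashima–Zelevinsky crystal structure for the sequence $(\dots,i_2,i_1)$, and $\Psi^+:\mathcal B(\infty)\hookrightarrow\mathbb Z^{+\infty}_{\ge0}$ the corresponding crystal embedding of the crystal basis of $U_q^-(\mathfrak g)$ (sending the highest element to the zero sequence). Put $\alpha=\frac{a_1a_2+\sqrt{a_1^2a_2^2-4a_1a_2}}{2a_2}$, $\beta=\frac{a_1a_2+\sqrt{a_1^2a_2^2-4a_1a_2}}{2a_1}$, $\gamma_k=\alpha$ ($k$ even), $\beta$ ($k$ odd). Fix $\lambda=k_1\Lambda_1-k_2\Lambda_2$,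 $k_1,k_2\in\mathbb Z_{>0}$, with: if $a_1,a_2\ge2$, $k_2\le k_1<(a_1-1)k_2$ or $k_1<k_2\le(a_2-1)k_1$; if $a_1=1$, $2k_1\le k_2\le(a_2-2)k_1$; if $a_2=1$, $2k_2\le k_1\le(a_1-2)k_2$. Let $p_0=k_2$, $p_1=k_1$, $p_{m+2}=a_2p_{m+1}-p_m$ ($m\ge0$ even), $p_{m+2}=a_1p_{m+1}-p_m$ ($m\ge0$ odd). Define $c_0=0$, $c_1=1$, $c_{j+2}=a_1c_{j+1}-c_j$ ($j$ even), $c_{j+2}=a_2c_{j+1}-c_j$ ($j$ odd). *)

theory Defs
  imports Complex_Main
begin

(* Sequences (..., x_2, x_1) are modelled as functions x :: nat => int;
   position 0 is unused (kept 0). *)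

definition ik :: "nat \<Rightarrow> nat" where
  "ik k = (if odd k then 1 else 2)"

(* Cartan integer <h_i, alpha_j>: <alpha_2, alpha_1^vee> = -a1, <alpha_1, alpha_2^vee> = -a2 *)
definition cartan :: "int \<Rightarrow> int \<Rightarrow> nat \<Rightarrow> nat \<Rightarrow> int" where
  "cartan a1 a2 i j = (if i = j then 2 else if i = 1 then - a1 else - a2)"

definition nz_sigma :: "int \<Rightarrow> int \<Rightarrow> (nat \<Rightarrow> int) \<Rightarrow> nat \<Rightarrow> int" where
  "nz_sigma a1 a2 x k =
     x k + (\<Sum>j\<in>{j. k < j \<and> x j \<noteq> 0}. cartan a1 a2 (ik k) (ik j) * x j)"

definition nz_mf :: "int \<Rightarrow> int \<Rightarrow> nat \<Rightarrow> (nat \<Rightarrow> int) \<Rightarrow> nat" where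
  "nz_mf a1 a2 i x = (LEAST k. 1 \<le> k \<and> ik k = i \<and>
      (\<forall>k'. 1 \<le> k' \<and> ik k' = i \<longrightarrow> nz_sigma a1 a2 x k' \<le> nz_sigma a1 a2 x k))"

definition nz_f :: "int \<Rightarrow> int \<Rightarrow> nat \<Rightarrow> (nat \<Rightarrow> int) \<Rightarrow> (nat \<Rightarrow> int)" where
  "nz_f a1 a2 i x = (let m = nz_mf a1 a2 i x in x(m := x m + 1))"

(* Im(Psi^+): the connected component of the zero sequence, i.e. all
   \tilde f_{j_1} ... \tilde f_{j_l} 0 (Kashiwara / Nakashima--Zelevinsky) *)
inductive_set ImPsi :: "int \<Rightarrow> int \<Rightarrow> (nat \<Rightarrow> int) set" for a1 a2 where
  zero: "(\<lambda>_. 0) \<in> ImPsi a1 a2"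
| step: "x \<in> ImPsi a1 a2 \<Longrightarrow> i \<in> {1, 2} \<Longrightarrow> nz_f a1 a2 i x \<in> ImPsi a1 a2"

fun pseq :: "int \<Rightarrow> int \<Rightarrow> int \<Rightarrow> int \<Rightarrow> nat \<Rightarrow> int" where
  "pseq a1 a2 k1 k2 0 = k2"
| "pseq a1 a2 k1 k2 (Suc 0) = k1"
| "pseq a1 a2 k1 k2 (Suc (Suc m)) =
     (if even m then a2 else a1) * pseq a1 a2 k1 k2 (Suc m) - pseq a1 a2 k1 k2 m"

fun cseq :: "int \<Rightarrow> int \<Rightarrow> nat \<Rightarrow> int" where
  "cseq a1 a2 0 = 0"
| "cseq a1 a2 (Suc 0) = 1"
| "cseq a1 a2 (Suc (Suc j)) =
     (if even j then a1 else a2) * cseq a1 a2 (Suc j) - cseq a1 a2 j"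

definition alpha_c :: "int \<Rightarrow> int \<Rightarrow> real" where
  "alpha_c a1 a2 = (a1 * a2 + sqrt (a1^2 * a2^2 - 4 * a1 * a2)) / (2 * a2)"

definition beta_c :: "int \<Rightarrow> int \<Rightarrow> real" where
  "beta_c a1 a2 = (a1 * a2 + sqrt (a1^2 * a2^2 - 4 * a1 * a2)) / (2 * a1)"

definition gamma_c :: "int \<Rightarrow> int \<Rightarrow> nat \<Rightarrow> real" where
  "gamma_c a1 a2 k = (if even k then alpha_c a1 a2 else beta_c a1 a2)"

end

theory Submission imports Defs begin

lemma ab_facts:
  fixes a1 a2 :: int
  assumes "a1 \<ge> 1" "a2 \<ge> 1" "a1 * a2 > 4"
  shows "alpha_c a1 a2 > 0" "beta_c a1 a2 > 0"
    "alpha_c a1 a2 = a1 - 1 / beta_c a1 a2" "beta_c a1 a2 = a2 - 1 / alpha_c a1 a2"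
    "alpha_c a1 a2 * beta_c a1 a2 > 1"
proof -
  define a where "a = real_of_int a1"
  define b where "b = real_of_int a2"
  have a: "a \<ge> 1" and b: "b \<ge> 1" and ab: "a * b > 4" using assms unfolding a_def b_def
    by (simp_all, metis of_int_less_iff of_int_mult of_int_numeral)
  define D where "D = sqrt (a^2 * b^2 - 4 * a * b)"
  have arg: "a^2 * b^2 - 4 * a * b \<ge> 0"
  proof -
    have "a^2*b^2 - 4*a*b = (a*b) * (a*b - 4)" by (simp add: power2_eq_square algebra_simps)
    moreover have "(a*b)*(a*b-4) \<ge> 0" using ab a b by (intro mult_nonneg_nonneg) auto
    ultimately show ?thesis by linarith
  qed
  have D0: "D \<ge> 0" unfolding D_def by (rule real_sqrt_ge_zero[OF arg])
  have D2: "D^2 = a^2 * b^2 - 4 * a * b" unfolding D_def by (rule real_sqrt_pow2[OF arg])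
  have al: "alpha_c a1 a2 = (a*b + D) / (2*b)" unfolding alpha_c_def a_def b_def D_def by simp
  have be: "beta_c a1 a2 = (a*b + D) / (2*a)" unfolding beta_c_def a_def b_def D_def by simp
  have pos: "a*b + D > 0" using ab D0 by linarith
  show "alpha_c a1 a2 > 0" using al pos b by simp
  show "beta_c a1 a2 > 0" using be pos a by simp
  show "alpha_c a1 a2 = a1 - 1 / beta_c a1 a2"
    unfolding al be a_def[symmetric] using pos a b D2
    by (simp add: field_simps power2_eq_square)
  show "beta_c a1 a2 = a2 - 1 / alpha_c a1 a2"
    unfolding al be b_def[symmetric] using pos a b D2
    by (simp add: field_simps power2_eq_square)
  have "alpha_c a1 a2 * beta_c a1 a2 = (a*b+D)^2 / (4*(a*b))"
    unfolding al be by (simp add: power2_eq_square field_simps)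
  moreover have "(a*b+D)^2 > 4*(a*b)"
  proof -
    have "(a*b+D)^2 \<ge> (a*b)^2" using D0 ab by (intro power_mono) auto
    moreover have "(a*b)^2 > 4*(a*b)" using ab by (simp add: power2_eq_square mult_strict_right_mono)
    ultimately show ?thesis by linarith
  qed
  ultimately show "alpha_c a1 a2 * beta_c a1 a2 > 1" using ab by simp
qed


definition gg :: "int \<Rightarrow> int \<Rightarrow> nat \<Rightarrow> real" where
  "gg a1 a2 j = (if even j then beta_c a1 a2 else alpha_c a1 a2)"

fun PP :: "int \<Rightarrow> int \<Rightarrow> nat \<Rightarrow> real" where
  "PP a1 a2 0 = 1"
| "PP a1 a2 (Suc j) = PP a1 a2 j / gg a1 a2 j"

lemma gg_pos: "a1 \<ge> 1 \<Longrightarrow> a2 \<ge> 1 \<Longrightarrow> a1 * a2 > 4 \<Longrightarrow> gg a1 a2 j > 0"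
  using ab_facts(1,2)[of a1 a2] unfolding gg_def by auto

lemma PP_pos: assumes "a1 \<ge> 1" "a2 \<ge> 1" "a1 * a2 > 4" shows "PP a1 a2 j > 0"
proof (induction j)
  case 0 then show ?case by simp
next
  case (Suc j) then show ?case using gg_pos[OF assms, of j] by simp
qed

lemma PP_2: assumes "a1 \<ge> 1" "a2 \<ge> 1" "a1 * a2 > 4"
  shows "PP a1 a2 (j + 2 * n) = PP a1 a2 j * (1 / (alpha_c a1 a2 * beta_c a1 a2)) ^ n"
proof (induction n)
  case 0 then show ?case by simp
next
  case (Suc n)
  have "j + 2 * Suc n = Suc (Suc (j + 2 * n))" by simp
  then have "PP a1 a2 (j + 2 * Suc n) = PP a1 a2 (j + 2*n) / (gg a1 a2 (j+2*n) * gg a1 a2 (Suc (j + 2*n)))"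
    by simp
  also have "gg a1 a2 (j+2*n) * gg a1 a2 (Suc (j + 2*n)) = alpha_c a1 a2 * beta_c a1 a2"
    unfolding gg_def by auto
  finally show ?case using Suc by simp
qed

lemma E_step:
  assumes "a1 \<ge> 1" "a2 \<ge> 1" "a1 * a2 > 4"
  shows "real_of_int (cseq a1 a2 (Suc (Suc j))) - gg a1 a2 (Suc j) * cseq a1 a2 (Suc j)
       = (cseq a1 a2 (Suc j) - gg a1 a2 j * cseq a1 a2 j) / gg a1 a2 j"
proof (cases "even j")
  case True
  have b: "beta_c a1 a2 > 0" and e: "alpha_c a1 a2 = a1 - 1 / beta_c a1 a2"
    using ab_facts(2)[OF assms] ab_facts(3)[OF assms] by blast+
  show ?thesis using True b unfolding gg_def e by (simp add: field_simps)
next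
  case False
  have b: "alpha_c a1 a2 > 0" and e: "beta_c a1 a2 = a2 - 1 / alpha_c a1 a2"
    using ab_facts(1)[OF assms] ab_facts(4)[OF assms] by blast+
  show ?thesis using False b unfolding gg_def e by (simp add: field_simps)
qed

lemma E_eq:
  assumes "a1 \<ge> 1" "a2 \<ge> 1" "a1 * a2 > 4"
  shows "real_of_int (cseq a1 a2 (Suc j)) - gg a1 a2 j * cseq a1 a2 j = PP a1 a2 j"
proof (induction j)
  case 0 then show ?case by simp
next
  case (Suc j) then show ?case using E_step[OF assms, of j] by simp
qed

lemma c_pos:
  assumes "a1 \<ge> 1" "a2 \<ge> 1" "a1 * a2 > 4"
  shows "cseq a1 a2 (Suc j) > 0"
proof (induction j)
  case 0 then show ?case by simp
next
  case (Suc j)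
  have "real_of_int (cseq a1 a2 (Suc (Suc j))) = gg a1 a2 (Suc j) * cseq a1 a2 (Suc j) + PP a1 a2 (Suc j)"
    using E_eq[OF assms, of "Suc j"] by simp
  moreover have "gg a1 a2 (Suc j) * cseq a1 a2 (Suc j) \<ge> 0"
    using Suc gg_pos[OF assms, of "Suc j"] by simp
  moreover have "PP a1 a2 (Suc j) > 0" using PP_pos[OF assms] by blast
  ultimately have "real_of_int (cseq a1 a2 (Suc (Suc j))) > 0" by linarith
  then show ?case by (simp only: of_int_0_less_iff)
qed

lemma ImPsi_nonneg: "x \<in> ImPsi a1 a2 \<Longrightarrow> x m \<ge> 0"
proof (induction arbitrary: m rule: ImPsi.induct)
  case zero then show ?case by simp
next
  case (step x i)
  define mm where "mm = nz_mf a1 a2 i x"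
  have "nz_f a1 a2 i x m = (x(mm := x mm + 1)) m" unfolding nz_f_def Let_def mm_def by simp
  also have "\<dots> \<ge> 0" using step.IH[of m] step.IH[of mm] by (simp add: fun_upd_def)
  finally show ?case .
qed

lemma key_identity:
  assumes "a1 \<ge> 1" "a2 \<ge> 1" "a1 * a2 > 4" "l \<ge> 1"
  shows "real_of_int (cseq a1 a2 (k + 2 * l) * x k - cseq a1 a2 (k + 2 * l - 1) * x (k + 1))
     = cseq a1 a2 (k + 2 * l - 1) * (gamma_c a1 a2 k * x k - x (k + 1)) + PP a1 a2 (k + 2 * l - 1) * x k"
proof -
  define j where "j = k + 2 * l - 1"
  have kj: "k + 2 * l = Suc j" using assms(4) unfolding j_def by simp
  have g: "gg a1 a2 j = gamma_c a1 a2 k" using assms(4) unfolding j_def gg_def gamma_c_def by auto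
  have e: "real_of_int (cseq a1 a2 (Suc j)) = gg a1 a2 j * cseq a1 a2 j + PP a1 a2 j"
    using E_eq[OF assms(1-3), of j] by simp
  show ?thesis unfolding kj j_def[symmetric] using e g by (simp add: algebra_simps)
qed

theorem proposition4p5:
  fixes a1 a2 k1 k2 :: int and x :: "nat \<Rightarrow> int" and k :: nat
  assumes "a1 \<ge> 1" and "a2 \<ge> 1" and "a1 * a2 > 4"
    and "k1 > 0" and "k2 > 0"
    and "a1 \<ge> 2 \<and> a2 \<ge> 2 \<longrightarrow>
           (k2 \<le> k1 \<and> k1 < (a1 - 1) * k2) \<or> (k1 < k2 \<and> k2 \<le> (a2 - 1) * k1)"
    and "a1 = 1 \<longrightarrow> 2 * k1 \<le> k2 \<and> k2 \<le> (a2 - 2) * k1"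
    and "a2 = 1 \<longrightarrow> 2 * k2 \<le> k1 \<and> k1 \<le> (a1 - 2) * k2"
    and "x \<in> ImPsi a1 a2"
    and "\<forall>m\<ge>1. x m \<le> pseq a1 a2 k1 k2 m"
    and "k \<ge> 1"
  shows "(\<forall>l\<ge>1. cseq a1 a2 (k + 2 * l) * x k - cseq a1 a2 (k + 2 * l - 1) * x (k + 1) \<ge> 0)
         \<longleftrightarrow> gamma_c a1 a2 k * x k - x (k + 1) \<ge> 0"
proof -
  note A = assms(1-3)
  have xk: "x k \<ge> 0" using ImPsi_nonneg[OF assms(9)] .
  have cpos: "cseq a1 a2 (k + 2 * l - 1) \<ge> 1" if "l \<ge> 1" for l
  proof -
    have "k + 2 * l - 1 = Suc (k + 2 * l - 2)" using that assms(11) by simp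
    then show ?thesis using c_pos[OF A, of "k + 2 * l - 2"] by simp
  qed
  show ?thesis
  proof
    assume H: "\<forall>l\<ge>1. cseq a1 a2 (k + 2 * l) * x k - cseq a1 a2 (k + 2 * l - 1) * x (k + 1) \<ge> 0"
    show "gamma_c a1 a2 k * x k - x (k + 1) \<ge> 0"
    proof (rule ccontr)
      assume "\<not> ?thesis"
      then have dpos: "x (k + 1) - gamma_c a1 a2 k * x k > 0" by simp
      define \<delta> where "\<delta> = x (k + 1) - gamma_c a1 a2 k * x k"
      have bound: "PP a1 a2 (k + 2 * l - 1) * x k \<ge> \<delta>" if "l \<ge> 1" for l
      proof -
        have "real_of_int (cseq a1 a2 (k + 2 * l) * x k - cseq a1 a2 (k + 2 * l - 1) * x (k + 1)) \<ge> 0"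
          using H that by (simp only: of_int_0_le_iff)
        then have "cseq a1 a2 (k + 2 * l - 1) * (- \<delta>) + PP a1 a2 (k + 2 * l - 1) * x k \<ge> 0"
          unfolding key_identity[OF A that] \<delta>_def by simp
        moreover have "real_of_int (cseq a1 a2 (k + 2 * l - 1)) * \<delta> \<ge> 1 * \<delta>"
          using cpos[OF that] dpos unfolding \<delta>_def
          by (intro mult_right_mono) auto
        ultimately show ?thesis by simp
      qed
      show False
      proof (cases "x k = 0")
        case True
        then show False using bound[of 1] dpos unfolding \<delta>_def by simp
      next
        case False
        then have xkp: "real_of_int (x k) > 0" using xk by simp
        define q where "q = 1 / (alpha_c a1 a2 * beta_c a1 a2)"
        have q1: "q < 1" unfolding q_def using ab_facts(5)[OF A] by simp
        have P1: "PP a1 a2 (k + 1) > 0" using PP_pos[OF A] by blast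
        have "\<delta> / (PP a1 a2 (k + 1) * x k) > 0" using dpos P1 xkp unfolding \<delta>_def[symmetric] by (intro divide_pos_pos mult_pos_pos)
        then obtain n where n: "q ^ n < \<delta> / (PP a1 a2 (k + 1) * x k)"
          using real_arch_pow_inv[OF _ q1] by blast
        have "k + 2 * (n + 1) - 1 = (k + 1) + 2 * n" by simp
        then have "PP a1 a2 (k + 2 * (n + 1) - 1) = PP a1 a2 (k + 1) * q ^ n"
          using PP_2[OF A, of "k + 1" n] unfolding q_def by simp
        then have "PP a1 a2 (k + 1) * q ^ n * x k \<ge> \<delta>" using bound[of "n + 1"] by simp
        moreover have "PP a1 a2 (k + 1) * q ^ n * x k < \<delta>"
        proof -
          have "q ^ n * (PP a1 a2 (k + 1) * x k) < \<delta>"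
            using n pos_less_divide_eq[OF mult_pos_pos[OF P1 xkp]] by blast
          then show ?thesis by (simp only: mult_ac)
        qed
        ultimately show False by simp
      qed
    qed
  next
    assume H: "gamma_c a1 a2 k * x k - x (k + 1) \<ge> 0"
    show "\<forall>l\<ge>1. cseq a1 a2 (k + 2 * l) * x k - cseq a1 a2 (k + 2 * l - 1) * x (k + 1) \<ge> 0"
    proof (intro allI impI)
      fix l :: nat assume l: "l \<ge> 1"
      have "real_of_int (cseq a1 a2 (k + 2 * l - 1)) * (gamma_c a1 a2 k * x k - x (k + 1)) \<ge> 0"
        using cpos[OF l] H by simp
      moreover have "PP a1 a2 (k + 2 * l - 1) * x k \<ge> 0" using PP_pos[OF A] xk
        by (simp add: less_imp_le)
      ultimately have "real_of_int (cseq a1 a2 (k + 2 * l) * x k - cseq a1 a2 (k + 2 * l - 1) * x (k + 1)) \<ge> 0"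
        unfolding key_identity[OF A l] by simp
      then show "cseq a1 a2 (k + 2 * l) * x k - cseq a1 a2 (k + 2 * l - 1) * x (k + 1) \<ge> 0"
        by (simp only: of_int_0_le_iff)
    qed
  qed
qed

end
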